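(* Let $S$ be a T2R semigroup, with $S=S_0\cup S_1$ as in the definition, and let $b\in S_0$ be such that $|J_b|=2$. Then $S_0J_b\subseteq I(b)$, $J_bS_0\subseteq I(b)$, and either $S_1J_b\subseteq I(b)$ or $S_1J_b=J_b$.
   Context: A semigroup $S$ is a $\Delta$-semigroup if the lattice of all congruences of $S$ is a chain with respect to inclusion. A semigroup $N$ with zero $0$ is nil if every element has some power equal to $0$; non-trivial means having more than one element. A T2R semigroup is a $\Delta$-semigroup $S$ which is the disjoint union of a non-trivial nil ideal $S_0$ (with zero $0$, which is then the zero of $S$) and a subsemigroup $S_1$ which is a two-element right zero semigroup (i.e. $S_1=\{u,v\}$ with $xy=y$ for $x,y\in S_1$). $S^1$ denotes $S$ with an identity $1$ adjoined. For $a\in S$: $J(a)=S^1aS^1$, $J_a=\{s\in S:J(s)=J(a)\}$, $I(a)=J(a)\setminus J_a$. Products of sets are taken elementwise. *)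

theory Defs
  imports Main
begin

definition semigroup_on :: "'a set \<Rightarrow> ('a \<Rightarrow> 'a \<Rightarrow> 'a) \<Rightarrow> bool" where
  "semigroup_on S f \<longleftrightarrow>
     (\<forall>x\<in>S. \<forall>y\<in>S. f x y \<in> S) \<and>
     (\<forall>x\<in>S. \<forall>y\<in>S. \<forall>w\<in>S. f (f x y) w = f x (f y w))"

definition congruence_on :: "'a set \<Rightarrow> ('a \<Rightarrow> 'a \<Rightarrow> 'a) \<Rightarrow> 'a rel \<Rightarrow> bool" where
  "congruence_on S f \<rho> \<longleftrightarrow> equiv S \<rho> \<and>
     (\<forall>a b c. (a, b) \<in> \<rho> \<longrightarrow> c \<in> S \<longrightarrow> (f c a, f c b) \<in> \<rho> \<and> (f a c, f b c) \<in> \<rho>)"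

definition delta_semigroup :: "'a set \<Rightarrow> ('a \<Rightarrow> 'a \<Rightarrow> 'a) \<Rightarrow> bool" where
  "delta_semigroup S f \<longleftrightarrow> semigroup_on S f \<and>
     (\<forall>\<rho> \<sigma>. congruence_on S f \<rho> \<longrightarrow> congruence_on S f \<sigma> \<longrightarrow> \<rho> \<subseteq> \<sigma> \<or> \<sigma> \<subseteq> \<rho>)"

text \<open>Positive powers: spow f x n = x^(n+1).\<close>
primrec spow :: "('a \<Rightarrow> 'a \<Rightarrow> 'a) \<Rightarrow> 'a \<Rightarrow> nat \<Rightarrow> 'a" where
  "spow f x 0 = x"
| "spow f x (Suc n) = f x (spow f x n)"

definition ideal_of :: "'a set \<Rightarrow> ('a \<Rightarrow> 'a \<Rightarrow> 'a) \<Rightarrow> 'a set \<Rightarrow> bool" where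
  "ideal_of S f I \<longleftrightarrow> I \<subseteq> S \<and> I \<noteq> {} \<and>
     (\<forall>s\<in>S. \<forall>x\<in>I. f s x \<in> I \<and> f x s \<in> I)"

definition nontrivial_nil_with_zero :: "'a set \<Rightarrow> ('a \<Rightarrow> 'a \<Rightarrow> 'a) \<Rightarrow> 'a \<Rightarrow> bool" where
  "nontrivial_nil_with_zero N f z \<longleftrightarrow> z \<in> N \<and>
     (\<forall>x\<in>N. f z x = z \<and> f x z = z) \<and>
     (\<forall>x\<in>N. \<exists>n. spow f x n = z) \<and>
     (\<exists>x\<in>N. x \<noteq> z)"

definition T2R :: "'a set \<Rightarrow> ('a \<Rightarrow> 'a \<Rightarrow> 'a) \<Rightarrow> 'a set \<Rightarrow> 'a \<Rightarrow> 'a \<Rightarrow> 'a \<Rightarrow> bool" where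
  "T2R S f S0 z u v \<longleftrightarrow> delta_semigroup S f \<and>
     S = S0 \<union> {u, v} \<and> S0 \<inter> {u, v} = {} \<and>
     ideal_of S f S0 \<and> nontrivial_nil_with_zero S0 f z \<and>
     u \<noteq> v \<and> (\<forall>x\<in>{u, v}. \<forall>y\<in>{u, v}. f x y = y)"

definition setmult :: "('a \<Rightarrow> 'a \<Rightarrow> 'a) \<Rightarrow> 'a set \<Rightarrow> 'a set \<Rightarrow> 'a set" where
  "setmult f A B = {f x y | x y. x \<in> A \<and> y \<in> B}"

text \<open>J(a) = S^1 a S^1.\<close>
definition Jideal :: "'a set \<Rightarrow> ('a \<Rightarrow> 'a \<Rightarrow> 'a) \<Rightarrow> 'a \<Rightarrow> 'a set" where
  "Jideal S f a = {a} \<union> {f s a | s. s \<in> S} \<union> {f a t | t. t \<in> S}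
                  \<union> {f (f s a) t | s t. s \<in> S \<and> t \<in> S}"

definition Jclass :: "'a set \<Rightarrow> ('a \<Rightarrow> 'a \<Rightarrow> 'a) \<Rightarrow> 'a \<Rightarrow> 'a set" where
  "Jclass S f a = {s \<in> S. Jideal S f s = Jideal S f a}"

definition Iideal :: "'a set \<Rightarrow> ('a \<Rightarrow> 'a \<Rightarrow> 'a) \<Rightarrow> 'a \<Rightarrow> 'a set" where
  "Iideal S f a = Jideal S f a - Jclass S f a"

end

theory Submission
  imports Defs
begin

locale t2rl =
  fixes S S0 :: "'a set" and f :: "'a \<Rightarrow> 'a \<Rightarrow> 'a" and z u v :: 'a
  assumes T: "T2R S f S0 z u v"
begin

lemma TT: "delta_semigroup S f" "S = S0 \<union> {u, v}" "S0 \<inter> {u, v} = {}"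
  "ideal_of S f S0" "nontrivial_nil_with_zero S0 f z" "u \<noteq> v"
  "\<forall>x\<in>{u, v}. \<forall>y\<in>{u, v}. f x y = y"
  using T unfolding T2R_def by blast+

lemma SS: "S = S0 \<union> {u, v}" and dj: "S0 \<inter> {u, v} = {}" and uv: "u \<noteq> v"
  using TT by blast+

lemma rz: "x \<in> {u,v} \<Longrightarrow> y \<in> {u,v} \<Longrightarrow> f x y = y"
  using TT(7) by blast

lemma sg: "semigroup_on S f"
  using TT(1) unfolding delta_semigroup_def by blast

lemma cl: "x \<in> S \<Longrightarrow> y \<in> S \<Longrightarrow> f x y \<in> S"
  using sg unfolding semigroup_on_def by blast

lemma assoc: "x \<in> S \<Longrightarrow> y \<in> S \<Longrightarrow> w \<in> S \<Longrightarrow> f (f x y) w = f x (f y w)"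
  using sg unfolding semigroup_on_def by blast

lemma idl: "s \<in> S \<Longrightarrow> x \<in> S0 \<Longrightarrow> f s x \<in> S0 \<and> f x s \<in> S0"
  using TT(4) unfolding ideal_of_def by blast

lemma S0S: "S0 \<subseteq> S" using SS by auto

lemma zS0: "z \<in> S0" and z0: "\<And>x. x \<in> S0 \<Longrightarrow> f z x = z \<and> f x z = z"
  and nil: "\<And>x. x \<in> S0 \<Longrightarrow> \<exists>n. spow f x n = z"
  using TT(5) unfolding nontrivial_nil_with_zero_def by blast+

lemma zero: assumes "w \<in> S" shows "f z w = z \<and> f w z = z"
proof (cases "w \<in> S0")
  case True then show ?thesis using z0 by auto
next
  case False
  then have w: "w \<in> {u,v}" using assms SS by auto
  have wS: "w \<in> S" using assms .
  have zS: "z \<in> S" using zS0 S0S by auto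
  have zw: "f z w \<in> S0" using idl[OF wS zS0] by auto
  have wz: "f w z \<in> S0" using idl[OF wS zS0] by auto
  have zwS: "f z w \<in> S" using zw S0S by auto
  have wzS: "f w z \<in> S" using wz S0S by auto
  have a1: "f (f z w) (f z w) = f z (f w (f z w))"
    using assoc[OF zS wS zwS] .
  have "f w (f z w) \<in> S0" using idl[OF wS zw] by auto
  then have a1': "f (f z w) (f z w) = z" using a1 z0 by auto
  have a2: "f (f z w) (f z w) = f (f (f z w) z) w"
    using assoc[OF zwS zS wS] by simp
  have "f (f z w) z = z" using z0 zw by auto
  then have "f z w = z" using a1' a2 by auto
  moreover
  have b1: "f (f w z) (f w z) = f w (f z (f w z))" using assoc[OF wS zS wzS] .
  have "f z (f w z) = z" using z0 wz by auto
  then have b1': "f (f w z) (f w z) = f w z" using b1 by simp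
  have b2: "f (f w z) (f w z) = f (f (f w z) w) z" using assoc[OF wzS wS zS] by simp
  have "f (f w z) w \<in> S0" using idl[OF wS wz] by auto
  then have "f (f (f w z) w) z = z" using z0 by auto
  then have "f w z = z" using b1' b2 by simp
  ultimately show ?thesis by simp
qed

lemma spowS0: "a \<in> S0 \<Longrightarrow> spow f a n \<in> S0"
proof (induction n)
  case 0 then show ?case by simp
next
  case (Suc n)
  have "a \<in> S" using Suc.prems S0S by auto
  then show ?case using idl[OF _ Suc.IH[OF Suc.prems]] by simp
qed

lemma spow_comm: "a \<in> S0 \<Longrightarrow> f (spow f a n) a = f a (spow f a n)"
proof (induction n)
  case 0 then show ?case by simp
next
  case (Suc n)
  have aS: "a \<in> S" using Suc.prems S0S by auto
  have pS: "spow f a n \<in> S" using spowS0[OF Suc.prems] S0S by auto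
  have "f (spow f a (Suc n)) a = f (f a (spow f a n)) a" by simp
  also have "\<dots> = f a (f (spow f a n) a)" using assoc aS pS by blast
  also have "\<dots> = f a (spow f a (Suc n))" using Suc by simp
  finally show ?case .
qed

lemma left1: assumes a: "a \<in> S0" and y: "y \<in> S" and q: "q \<in> S"
  and e: "y = f a (f y q)" shows "\<exists>w\<in>S. y = f (spow f a n) w"
proof (induction n)
  case 0 then show ?case using e y q cl by auto
next
  case (Suc n)
  then obtain w where w: "w \<in> S" "y = f (spow f a n) w" by auto
  have aS: "a \<in> S" using a S0S by auto
  have pS: "spow f a n \<in> S" using spowS0[OF a] S0S by auto
  have "f a (f y q) = f a (f (f (spow f a n) w) q)" using w(2) by simp
  with e have "y = f a (f (f (spow f a n) w) q)" by (rule trans)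
  also have "\<dots> = f a (f (spow f a n) (f w q))" using assoc pS w q by simp
  also have "\<dots> = f (f a (spow f a n)) (f w q)" using assoc aS pS w q cl by simp
  finally show ?case using cl w q by auto
qed

lemma left2: assumes a: "a \<in> S0" and y: "y \<in> S"
  and e: "y = f a y" shows "\<exists>w\<in>S. y = f (spow f a n) w"
proof (induction n)
  case 0 then show ?case using e y by auto
next
  case (Suc n)
  then obtain w where w: "w \<in> S" "y = f (spow f a n) w" by auto
  have aS: "a \<in> S" using a S0S by auto
  have pS: "spow f a n \<in> S" using spowS0[OF a] S0S by auto
  have "f a y = f a (f (spow f a n) w)" using w(2) by simp
  with e have "y = f a (f (spow f a n) w)" by (rule trans)
  also have "\<dots> = f (f a (spow f a n)) w" using assoc aS pS w by simp
  finally show ?case using w by auto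
qed

lemma right1: assumes a: "a \<in> S0" and y: "y \<in> S" and q: "q \<in> S"
  and e: "y = f (f q y) a" shows "\<exists>w\<in>S. y = f w (spow f a n)"
proof (induction n)
  case 0 then show ?case using e y q cl by auto
next
  case (Suc n)
  then obtain w where w: "w \<in> S" "y = f w (spow f a n)" by auto
  have aS: "a \<in> S" using a S0S by auto
  have pS: "spow f a n \<in> S" using spowS0[OF a] S0S by auto
  have "f (f q y) a = f (f q (f w (spow f a n))) a" using w(2) by simp
  with e have "y = f (f q (f w (spow f a n))) a" by (rule trans)
  also have "\<dots> = f (f (f q w) (spow f a n)) a" using assoc pS w q by simp
  also have "\<dots> = f (f q w) (f (spow f a n) a)" using assoc aS pS w q cl by simp
  also have "\<dots> = f (f q w) (spow f a (Suc n))" using spow_comm[OF a] by simp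
  finally show ?case using cl w q by auto
qed

lemma right2: assumes a: "a \<in> S0" and y: "y \<in> S"
  and e: "y = f y a" shows "\<exists>w\<in>S. y = f w (spow f a n)"
proof (induction n)
  case 0 then show ?case using e y by auto
next
  case (Suc n)
  then obtain w where w: "w \<in> S" "y = f w (spow f a n)" by auto
  have aS: "a \<in> S" using a S0S by auto
  have pS: "spow f a n \<in> S" using spowS0[OF a] S0S by auto
  have "f y a = f (f w (spow f a n)) a" using w(2) by simp
  with e have "y = f (f w (spow f a n)) a" by (rule trans)
  also have "\<dots> = f w (f (spow f a n) a)" using assoc aS pS w by simp
  also have "\<dots> = f w (spow f a (Suc n))" using spow_comm[OF a] by simp
  finally show ?case using w by auto
qed

lemma Lkill: assumes a: "a \<in> S0" and "\<And>n. \<exists>w\<in>S. y = f (spow f a n) w" shows "y = z"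
proof -
  obtain n where "spow f a n = z" using nil a by blast
  then show ?thesis using assms(2)[of n] zero by auto
qed

lemma Rkill: assumes a: "a \<in> S0" and "\<And>n. \<exists>w\<in>S. y = f w (spow f a n)" shows "y = z"
proof -
  obtain n where "spow f a n = z" using nil a by blast
  then show ?thesis using assms(2)[of n] zero by auto
qed

lemma L: assumes s: "s \<in> S0" and y: "y \<in> S" and m: "y \<in> Jideal S f (f s y)"
  shows "y = z"
proof -
  have sS: "s \<in> S" using s S0S by auto
  from m consider "y = f s y" | t where "t \<in> S" "y = f t (f s y)"
    | t where "t \<in> S" "y = f (f s y) t"
    | t t' where "t \<in> S" "t' \<in> S" "y = f (f t (f s y)) t'"
    unfolding Jideal_def by blast
  then show ?thesis
  proof cases
    case 1 then show ?thesis using Lkill[OF s] left2[OF s y] by blast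
  next
    case (2 t)
    have a: "f t s \<in> S0" using idl[OF 2(1) s] by auto
    have "y = f (f t s) y" using 2 assoc sS y by simp
    then show ?thesis using Lkill[OF a] left2[OF a y] by blast
  next
    case (3 t)
    have "y = f s (f y t)" using 3 assoc sS y by simp
    then show ?thesis using Lkill[OF s] left1[OF s y 3(1)] by blast
  next
    case (4 t t')
    have a: "f t s \<in> S0" using idl[OF 4(1) s] by auto
    have "y = f (f (f t s) y) t'" using 4 assoc sS y by simp
    also have "\<dots> = f (f t s) (f y t')" using assoc a S0S y 4 by (meson subsetD)
    finally show ?thesis using Lkill[OF a] left1[OF a y 4(2)] by blast
  qed
qed

lemma R: assumes s: "s \<in> S0" and y: "y \<in> S" and m: "y \<in> Jideal S f (f y s)"
  shows "y = z"
proof -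
  have sS: "s \<in> S" using s S0S by auto
  from m consider "y = f y s" | t where "t \<in> S" "y = f t (f y s)"
    | t where "t \<in> S" "y = f (f y s) t"
    | t t' where "t \<in> S" "t' \<in> S" "y = f (f t (f y s)) t'"
    unfolding Jideal_def by blast
  then show ?thesis
  proof cases
    case 1 then show ?thesis using Rkill[OF s] right2[OF s y] by blast
  next
    case (2 t)
    have "y = f (f t y) s" using 2 assoc sS y by simp
    then show ?thesis using Rkill[OF s] right1[OF s y 2(1)] by blast
  next
    case (3 t)
    have a: "f s t \<in> S0" using idl[OF 3(1) s] by auto
    have "y = f y (f s t)" using 3 assoc sS y by simp
    then show ?thesis using Rkill[OF a] right2[OF a y] by blast
  next
    case (4 t t')
    have a: "f s t' \<in> S0" using idl[OF 4(2) s] by auto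
    have "y = f (f (f t y) s) t'" using 4 assoc sS y cl by simp
    also have "\<dots> = f (f t y) (f s t')" using assoc sS y 4 cl by simp
    finally show ?thesis using Rkill[OF a] right1[OF a y 4(1)] by blast
  qed
qed

lemma J1: "x \<in> Jideal S f x" unfolding Jideal_def by auto

lemma JS: "x \<in> S \<Longrightarrow> Jideal S f x \<subseteq> S" unfolding Jideal_def using cl by auto

lemma J2: assumes x: "x \<in> S" and y: "y \<in> Jideal S f x" and s: "s \<in> S"
  shows "f s y \<in> Jideal S f x \<and> f y s \<in> Jideal S f x"
proof -
  from y consider "y = x" | t where "t \<in> S" "y = f t x"
    | t where "t \<in> S" "y = f x t"
    | t t' where "t \<in> S" "t' \<in> S" "y = f (f t x) t'"
    unfolding Jideal_def by blast
  then show ?thesis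
  proof cases
    case 1 then show ?thesis using s unfolding Jideal_def by blast
  next
    case (2 t)
    have "f s y = f (f s t) x" using assoc s 2 x by simp
    moreover have "f s t \<in> S" using cl s 2 by auto
    ultimately show ?thesis using 2 s unfolding Jideal_def by blast
  next
    case (3 t)
    have "f y s = f x (f t s)" using assoc s 3 x by simp
    moreover have "f s y = f (f s x) t" using assoc s 3 x by simp
    moreover have "f t s \<in> S" using cl s 3 by auto
    ultimately show ?thesis using 3 s unfolding Jideal_def by blast
  next
    case (4 t t')
    have "f s y = f (f (f s t) x) t'" using assoc s 4 x cl by simp
    moreover have "f y s = f (f t x) (f t' s)" using assoc s 4 x cl by simp
    moreover have "f s t \<in> S" "f t' s \<in> S" using cl s 4 by auto
    ultimately show ?thesis using 4 s unfolding Jideal_def by blast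
  qed
qed

lemma J3: assumes x: "x \<in> S" and y: "y \<in> Jideal S f x" shows "Jideal S f y \<subseteq> Jideal S f x"
proof
  fix w assume "w \<in> Jideal S f y"
  then consider "w = y" | s where "s \<in> S" "w = f s y"
    | s where "s \<in> S" "w = f y s"
    | s t where "s \<in> S" "t \<in> S" "w = f (f s y) t"
    unfolding Jideal_def by blast
  then show "w \<in> Jideal S f x"
  proof cases
    case 1 then show ?thesis using y by simp
  next
    case (2 s) then show ?thesis using J2[OF x y] by blast
  next
    case (3 s) then show ?thesis using J2[OF x y] by blast
  next
    case (4 s t)
    have "f s y \<in> Jideal S f x" using J2[OF x y 4(1)] by auto
    then show ?thesis using J2[OF x _ 4(2)] 4(3) by auto
  qed
qed

end

theorem corollary3:
  fixes S S0 :: "'a set" and f :: "'a \<Rightarrow> 'a \<Rightarrow> 'a" and z u v b :: 'a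
  assumes "T2R S f S0 z u v"
    and "b \<in> S0"
    and "card (Jclass S f b) = 2"
  shows "setmult f S0 (Jclass S f b) \<subseteq> Iideal S f b
       \<and> setmult f (Jclass S f b) S0 \<subseteq> Iideal S f b
       \<and> (setmult f {u, v} (Jclass S f b) \<subseteq> Iideal S f b
          \<or> setmult f {u, v} (Jclass S f b) = Jclass S f b)"
proof -
  interpret t2rl S S0 f z u v using assms(1) by (unfold_locales)
  define C where "C = Jclass S f b"
  have bS: "b \<in> S" using assms(2) S0S by auto
  have memC: "\<And>x. x \<in> C \<longleftrightarrow> x \<in> S \<and> Jideal S f x = Jideal S f b"
    unfolding C_def Jclass_def by auto
  have zS: "z \<in> S" using zS0 S0S by auto
  have nz: "\<And>x. x \<in> C \<Longrightarrow> x \<noteq> z"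
  proof
    fix x assume x: "x \<in> C" "x = z"
    have Jz: "Jideal S f z \<subseteq> {z}" unfolding Jideal_def using zero cl zS by auto
    have "C \<subseteq> {z}"
    proof
      fix s assume "s \<in> C"
      then have "s \<in> Jideal S f z" using memC[of s] memC[of z] x J1[of s] by auto
      then show "s \<in> {z}" using Jz by auto
    qed
    then have "card C \<le> 1" using card_mono[of "{z}" C] by simp
    then show False using assms(3) C_def by simp
  qed
  have IC: "\<And>y x. x \<in> C \<Longrightarrow> y \<in> Jideal S f x \<Longrightarrow> y \<notin> C \<Longrightarrow> y \<in> Iideal S f b"
    unfolding Iideal_def using memC C_def by auto
  have p1: "setmult f S0 C \<subseteq> Iideal S f b"
  proof
    fix y assume "y \<in> setmult f S0 C"
    then obtain s x where sx: "s \<in> S0" "x \<in> C" "y = f s x" unfolding setmult_def by auto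
    have xS: "x \<in> S" using sx memC by auto
    have sS: "s \<in> S" using sx S0S by auto
    have yJ: "y \<in> Jideal S f x" unfolding Jideal_def using sx sS by auto
    have "y \<notin> C"
    proof
      assume "y \<in> C"
      then have "Jideal S f y = Jideal S f x" using memC[of y] memC[of x] sx by auto
      then have "x \<in> Jideal S f (f s x)" using J1[of x] sx by auto
      then show False using L[OF sx(1) xS] nz sx by blast
    qed
    then show "y \<in> Iideal S f b" using IC sx yJ by blast
  qed
  have p2: "setmult f C S0 \<subseteq> Iideal S f b"
  proof
    fix y assume "y \<in> setmult f C S0"
    then obtain s x where sx: "s \<in> S0" "x \<in> C" "y = f x s" unfolding setmult_def by auto
    have xS: "x \<in> S" using sx memC by auto
    have sS: "s \<in> S" using sx S0S by auto
    have yJ: "y \<in> Jideal S f x" unfolding Jideal_def using sx sS by auto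
    have "y \<notin> C"
    proof
      assume "y \<in> C"
      then have "Jideal S f y = Jideal S f x" using memC[of y] memC[of x] sx by auto
      then have "x \<in> Jideal S f (f x s)" using J1[of x] sx by auto
      then show False using R[OF sx(1) xS] nz sx by blast
    qed
    then show "y \<in> Iideal S f b" using IC sx yJ by blast
  qed
  have uvS: "u \<in> S" "v \<in> S" using SS by auto
  have p3: "setmult f {u, v} C \<subseteq> Iideal S f b \<or> setmult f {u, v} C = C"
  proof (cases "\<exists>w\<in>{u,v}. \<exists>x\<in>C. f w x \<in> C")
    case False
    have "setmult f {u, v} C \<subseteq> Iideal S f b"
    proof
      fix y assume "y \<in> setmult f {u, v} C"
      then obtain w x where wx: "w \<in> {u,v}" "x \<in> C" "y = f w x" unfolding setmult_def by auto
      have "w \<in> S" using wx uvS by auto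
      then have yJ: "y \<in> Jideal S f x" unfolding Jideal_def using wx by auto
      have "y \<notin> C" using False wx by auto
      then show "y \<in> Iideal S f b" using IC wx yJ by blast
    qed
    then show ?thesis ..
  next
    case True
    then obtain w x where wx: "w \<in> {u,v}" "x \<in> C" "f w x \<in> C" by auto
    define y where "y = f w x"
    have yC: "y \<in> C" using wx y_def by simp
    have xS: "x \<in> S" using wx memC by auto
    have wS: "w \<in> S" using wx uvS by auto
    have yS: "y \<in> S" using yC memC by auto
    have fixy: "\<And>r. r \<in> {u,v} \<Longrightarrow> f r y = y"
    proof -
      fix r assume r: "r \<in> {u,v}"
      have "f r y = f (f r w) x" using assoc r uvS wS xS y_def by auto
      then show "f r y = y" using rz[OF r wx(1)] y_def by simp
    qed
    have noS0: "\<And>s y'. s \<in> S0 \<Longrightarrow> y' \<in> C \<Longrightarrow> y' \<in> Jideal S f (f s y) \<Longrightarrow> False"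
    proof -
      fix s y' assume s: "s \<in> S0" and y': "y' \<in> C" "y' \<in> Jideal S f (f s y)"
      have sS: "s \<in> S" using s S0S by auto
      have "Jideal S f y' \<subseteq> Jideal S f (f s y)" using J3 y' cl sS yS by blast
      moreover have "Jideal S f y' = Jideal S f y" using memC[of y'] memC[of y] y' yC by auto
      ultimately have "y \<in> Jideal S f (f s y)" using J1 by blast
      then show False using L[OF s yS] nz yC by blast
    qed
    have fixall: "\<And>y' r. y' \<in> C \<Longrightarrow> r \<in> {u,v} \<Longrightarrow> f r y' = y'"
    proof -
      fix y' r assume y': "y' \<in> C" and r: "r \<in> {u,v}"
      have rS: "r \<in> S" using r uvS by auto
      have "y' \<in> Jideal S f y" using memC[of y'] memC[of y] y' yC J1[of y'] by auto
      then consider "y' = y" | s where "s \<in> S" "y' = f s y"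
        | t where "t \<in> S" "y' = f y t"
        | s t where "s \<in> S" "t \<in> S" "y' = f (f s y) t"
        unfolding Jideal_def by blast
      then show "f r y' = y'"
      proof cases
        case 1 then show ?thesis using fixy r by simp
      next
        case (2 s)
        show ?thesis
        proof (cases "s \<in> S0")
          case True
          then show ?thesis using noS0[OF True y'(1)] 2 J1[of y'] by auto
        next
          case False
          then have "s \<in> {u,v}" using 2 SS by auto
          then show ?thesis using 2 fixy r by simp
        qed
      next
        case (3 t)
        have "f r y' = f (f r y) t" using 3 assoc rS yS by simp
        then show ?thesis using fixy r 3 by simp
      next
        case (4 s t)
        show ?thesis
        proof (cases "s \<in> S0")
          case True
          have "y' \<in> Jideal S f (f s y)" using 4 unfolding Jideal_def by auto
          then show ?thesis using noS0[OF True y'(1)] by blast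
        next
          case False
          then have "s \<in> {u,v}" using 4 SS by auto
          then have "y' = f y t" using 4 fixy by simp
          moreover have "f r (f y t) = f (f r y) t" using assoc rS yS 4 by simp
          ultimately show ?thesis using fixy r by simp
        qed
      qed
    qed
    have "setmult f {u, v} C = C"
    proof
      show "setmult f {u, v} C \<subseteq> C" unfolding setmult_def using fixall by auto
      show "C \<subseteq> setmult f {u, v} C" unfolding setmult_def using fixall by force
    qed
    then show ?thesis ..
  qed
  show ?thesis using p1 p2 p3 C_def by simp
qed

end
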